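(* Consider the two-route traffic model with affine routing ratios described in the context, with penetration rate $\alpha\in[0,1]$ and equilibrium $\overline{x}(\alpha)$, and assume that for every $\alpha\in[0,1]$ there is no unsatisfied demand at equilibrium, i.e., $\phi R_\ell(\overline{x}(\alpha))\le F_\ell$ for $\ell=1,2$. Let $J(x)=\phi R_1(x)\frac{x_1}{B_1}+\phi R_2(x)\frac{x_2}{B_2}$, and define $\xi_1=\frac{E_1}{E_1+E_2}$, $\xi_2=\frac{E_1E_2+E_1(F_1+F_2)}{2E_1E_2+(E_1+E_2)(F_1+F_2)}$, $\overline{\alpha}=\frac{2(r_1^0(E_1+E_2)-E_1)}{(2r_1^0-1)(E_1+E_2)}$, $\overline{\phi}=\frac{E_1E_2(1-2r_1^0)}{r_1^0(E_1+E_2)-E_1}$. Suppose $E_1\ge E_2$. Then: (a) if $r_1^0<1/2$, $\alpha\mapsto J(\overline{x}(\alpha))$ is decreasing on $[0,1]$; (b) if $1/2\le r_1^0\le\xi_2$ and $\phi<\overline{\phi}$, it is increasing on $[0,1]$; (c) if $1/2\le r_1^0\le\xi_2$ and $\phi\ge\overline{\phi}$, it is decreasing on $[0,1]$; (d) if $\xi_2\le r_1^0\le\xi_1$, it is increasing on $[0,1]$; (e) if $r_1^0\ge\xi_1$, it is increasing for $\alpha\in(\overline{\alpha},1]$ and attains its minimum at $\alpha=\overline{\alpha}$. Suppose instead $E_1<E_2$. Then: (f) if $r_1^0\le\xi_1$, $\alpha\mapsto J(\overline{x}(\alpha))$ is increasing for $\alpha\in(\overline{\alpha},1]$ and attains its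 minimum at $\alpha=\overline{\alpha}$; (g) if $\xi_1<r_1^0\le\xi_2$, it is increasing on $[0,1]$; (h) if $\xi_2<r_1^0\le1/2$ and $\phi<\overline{\phi}$, it is increasing on $[0,1]$; (i) if $\xi_2<r_1^0\le1/2$ and $\phi\ge\overline{\phi}$, it is decreasing on $[0,1]$; (j) if $r_1^0>1/2$, it is decreasing on $[0,1]$.
   Context: Two routes $i=1,2$ connect an origin to a destination, with positive parameters $B_i$ (jam density), $C_i$ (critical density), $F_i$ (capacity), $C_i<B_i$, and constant demand $\phi>0$. Set $v_i=F_i/C_i$ and $E_i=v_iB_i$. The state $x=(x_1,x_2)\in\Omega:=[0,B_1]\times[0,B_2]$ evolves by $\dot x_i=\min\{\phi R_i(x),S_i(x_i)\}-D_i(x_i)$, with $S_i(x_i)=F_i$ if $x_i<C_i$, $S_i(x_i)=\frac{F_i}{B_i-C_i}(B_i-x_i)$ otherwise; $D_i(x_i)=v_ix_i$ if $x_i<C_i$, $D_i(x_i)=F_i$ otherwise. The routing ratios are affine: with penetration rate $\alpha$ and constants $r_1^0,r_2^0\ge0$, $r_1^0+r_2^0=1$, $R_1(x)=(1-\alpha)r_1^0+\alpha\big(\tfrac12+\tfrac12(\tfrac{x_2}{B_2}-\tfrac{x_1}{B_1})\big)$, $R_2(x)=(1-\alpha)r_2^0+\alpha\big(\tfrac12+\tfrac12(\tfrac{x_1}{B_1}-\tfrac{x_2}{B_2})\big)$. Standing assumptions: $\phi<F_1+F_2$; $F_i>(1-\alpha)\phi r_i^0$ for $i=1,2$; $\phi<E_i$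 for $i=1,2$. The system has, for each $\alpha$, a unique equilibrium $\overline{x}(\alpha)\in\Omega$. *)

theory Defs
  imports Complex_Main
begin

text \<open>Parameters: jam densities B1 B2, critical densities C1 C2, capacities F1 F2,
  demandf phi, baseline routing ratios r1 r2, penetration rate alpha.\<close>

definition supplyf :: "real \<Rightarrow> real \<Rightarrow> real \<Rightarrow> real \<Rightarrow> real" where
  "supplyf B C F y = (if y < C then F else F / (B - C) * (B - y))"

definition demandf :: "real \<Rightarrow> real \<Rightarrow> real \<Rightarrow> real" where
  "demandf C F y = (if y < C then (F / C) * y else F)"

definition Ecap :: "real \<Rightarrow> real \<Rightarrow> real \<Rightarrow> real" where
  "Ecap B C F = (F / C) * B"

definition R1 :: "real \<Rightarrow> real \<Rightarrow> real \<Rightarrow> real \<Rightarrow> real \<times> real \<Rightarrow> real" where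
  "R1 B1 B2 r1 \<alpha> x = (1 - \<alpha>) * r1 + \<alpha> * (1/2 + 1/2 * (snd x / B2 - fst x / B1))"

definition R2 :: "real \<Rightarrow> real \<Rightarrow> real \<Rightarrow> real \<Rightarrow> real \<times> real \<Rightarrow> real" where
  "R2 B1 B2 r2 \<alpha> x = (1 - \<alpha>) * r2 + \<alpha> * (1/2 + 1/2 * (fst x / B1 - snd x / B2))"

definition Omega :: "real \<Rightarrow> real \<Rightarrow> (real \<times> real) set" where
  "Omega B1 B2 = {0..B1} \<times> {0..B2}"

definition is_equilibrium ::
  "real \<Rightarrow> real \<Rightarrow> real \<Rightarrow> real \<Rightarrow> real \<Rightarrow> real \<Rightarrow> real \<Rightarrow> real \<Rightarrow> real \<Rightarrow> real
   \<Rightarrow> real \<times> real \<Rightarrow> bool" where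
  "is_equilibrium B1 B2 C1 C2 F1 F2 \<phi> r1 r2 \<alpha> x \<longleftrightarrow>
     x \<in> Omega B1 B2 \<and>
     min (\<phi> * R1 B1 B2 r1 \<alpha> x) (supplyf B1 C1 F1 (fst x)) - demandf C1 F1 (fst x) = 0 \<and>
     min (\<phi> * R2 B1 B2 r2 \<alpha> x) (supplyf B2 C2 F2 (snd x)) - demandf C2 F2 (snd x) = 0"

definition xbar ::
  "real \<Rightarrow> real \<Rightarrow> real \<Rightarrow> real \<Rightarrow> real \<Rightarrow> real \<Rightarrow> real \<Rightarrow> real \<Rightarrow> real \<Rightarrow> real
   \<Rightarrow> real \<times> real" where
  "xbar B1 B2 C1 C2 F1 F2 \<phi> r1 r2 \<alpha> = (THE x. is_equilibrium B1 B2 C1 C2 F1 F2 \<phi> r1 r2 \<alpha> x)"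

definition Jcost :: "real \<Rightarrow> real \<Rightarrow> real \<Rightarrow> real \<Rightarrow> real \<Rightarrow> real \<Rightarrow> real \<times> real \<Rightarrow> real" where
  "Jcost B1 B2 \<phi> r1 r2 \<alpha> x =
     \<phi> * R1 B1 B2 r1 \<alpha> x * (fst x / B1) + \<phi> * R2 B1 B2 r2 \<alpha> x * (snd x / B2)"

definition xi1 :: "real \<Rightarrow> real \<Rightarrow> real" where
  "xi1 E1 E2 = E1 / (E1 + E2)"

definition xi2 :: "real \<Rightarrow> real \<Rightarrow> real \<Rightarrow> real \<Rightarrow> real" where
  "xi2 E1 E2 F1 F2 = (E1 * E2 + E1 * (F1 + F2)) / (2 * E1 * E2 + (E1 + E2) * (F1 + F2))"

definition alphabar :: "real \<Rightarrow> real \<Rightarrow> real \<Rightarrow> real" where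
  "alphabar E1 E2 r1 = 2 * (r1 * (E1 + E2) - E1) / ((2 * r1 - 1) * (E1 + E2))"

definition phibar :: "real \<Rightarrow> real \<Rightarrow> real \<Rightarrow> real" where
  "phibar E1 E2 r1 = E1 * E2 * (1 - 2 * r1) / (r1 * (E1 + E2) - E1)"

definition incr_on :: "real set \<Rightarrow> (real \<Rightarrow> real) \<Rightarrow> bool" where
  "incr_on A f \<longleftrightarrow> (\<forall>a\<in>A. \<forall>b\<in>A. a \<le> b \<longrightarrow> f a \<le> f b)"

definition decr_on :: "real set \<Rightarrow> (real \<Rightarrow> real) \<Rightarrow> bool" where
  "decr_on A f \<longleftrightarrow> (\<forall>a\<in>A. \<forall>b\<in>A. a \<le> b \<longrightarrow> f b \<le> f a)"

end

theory Submission
  imports Defs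
begin


lemma eq_lin:
  assumes "min p (supplyf B C F y) - demandf C F y = 0" "p \<le> F" "0 \<le> y" "C < B" "C > 0" "F > 0"
  shows "(F / C) * y = p"
proof (cases "y < C")
  case True thus ?thesis using assms by (auto simp: supplyf_def demandf_def min_def split: if_splits)
next
  case False
  then have s: "supplyf B C F y = F/(B-C)*(B-y)" "demandf C F y = F" by (auto simp: supplyf_def demandf_def)
  have le: "F/(B-C)*(B-y) \<le> F"
  proof -
    have "(B-y)/(B-C) \<le> 1" using False assms by (simp add: divide_le_eq_1)
    then have "F*((B-y)/(B-C)) \<le> F*1" using assms by (intro mult_left_mono) auto
    then show ?thesis by simp
  qed
  have m: "min p (F/(B-C)*(B-y)) = F" using assms(1) s by simp
  then have "p = F" "F/(B-C)*(B-y) = F" using le assms(2) by (auto simp: min_def split: if_splits)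
  then have "B - y = B - C" using assms by (simp add: field_simps)
  then have "y = C" by simp
  then show ?thesis using \<open>p = F\<close> assms by simp
qed

lemma sq_diff:
  fixes l0 l1 c a b :: real
  assumes "1 + c*a > 0" "1 + c*b > 0"
  shows "((l0+l1*b)/(1+c*b))^2 - ((l0+l1*a)/(1+c*a))^2 =
     (b-a)*((l1 - l0*c)*((l0+l1*a)*(1+c*b) + (l0+l1*b)*(1+c*a))) / ((1+c*a)*(1+c*b))^2"
proof -
  define Da where "Da = 1+c*a"
  define Db where "Db = 1+c*b"
  define La where "La = l0+l1*a"
  define Lb where "Lb = l0+l1*b"
  have p: "Da > 0" "Db > 0" using assms Da_def Db_def by auto
  have poly: "(Lb*Da)^2 - (La*Db)^2 = (b-a)*((l1 - l0*c)*(La*Db + Lb*Da))"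
    unfolding La_def Lb_def Da_def Db_def by algebra
  have "(Lb/Db)^2 - (La/Da)^2 = ((Lb*Da)^2 - (La*Db)^2) / (Da*Db)^2"
    using p by (simp add: field_simps power2_eq_square)
  then show ?thesis using poly unfolding La_def Lb_def Da_def Db_def by simp
qed

lemma sq_mono:
  fixes l0 l1 c a b :: real
  assumes "1 + c*a > 0" "1 + c*b > 0" "a \<le> b"
    and "(l1 - l0*c)*((l0+l1*a)*(1+c*b) + (l0+l1*b)*(1+c*a)) \<ge> 0"
  shows "((l0+l1*a)/(1+c*a))^2 \<le> ((l0+l1*b)/(1+c*b))^2"
proof -
  have "0 \<le> (b-a)*((l1 - l0*c)*((l0+l1*a)*(1+c*b) + (l0+l1*b)*(1+c*a))) / ((1+c*a)*(1+c*b))^2"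
    using assms by (intro divide_nonneg_nonneg mult_nonneg_nonneg[of "b-a"]) auto
  then show ?thesis using sq_diff[OF assms(1,2), of l0 l1] by simp
qed

lemma sq_anti:
  fixes l0 l1 c a b :: real
  assumes "1 + c*a > 0" "1 + c*b > 0" "a \<le> b"
    and "(l1 - l0*c)*((l0+l1*a)*(1+c*b) + (l0+l1*b)*(1+c*a)) \<le> 0"
  shows "((l0+l1*b)/(1+c*b))^2 \<le> ((l0+l1*a)/(1+c*a))^2"
proof -
  have "0 \<le> (b-a)*(-((l1 - l0*c)*((l0+l1*a)*(1+c*b) + (l0+l1*b)*(1+c*a)))) / ((1+c*a)*(1+c*b))^2"
    using assms by (intro divide_nonneg_nonneg mult_nonneg_nonneg[of "b-a"]) auto
  then show ?thesis using sq_diff[OF assms(1,2), of l0 l1] by simp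
qed

lemma quad_id:
  fixes E1 E2 X R \<phi> :: real
  assumes E: "E1 > 0" "E2 > 0" and X: "X*E1 + X*E2 = E1"
  shows "\<phi>*R*(\<phi>*R/E1) + \<phi>*(1-R)*(\<phi>*(1-R)/E2) = \<phi>^2*(X/E1) + \<phi>^2*(1/E1+1/E2)*(R-X)^2"
proof -
  have a: "E1*E2*(\<phi>*R*(\<phi>*R/E1) + \<phi>*(1-R)*(\<phi>*(1-R)/E2)) = \<phi>^2*(E2*R^2 + E1*(1-R)^2)"
    using E by (simp add: field_simps power2_eq_square)
  have b: "E1*E2*(\<phi>^2*(X/E1) + \<phi>^2*(1/E1+1/E2)*(R-X)^2) = \<phi>^2*(E2*X + (E1+E2)*(R-X)^2)"
    using E by (simp add: field_simps power2_eq_square)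
  have c: "E2*R^2 + E1*(1-R)^2 = E2*X + (E1+E2)*(R-X)^2"
  proof -
    have "E2*X + (E1+E2)*(R-X)^2 = (E1+E2)*R^2 - 2*R*(X*E1 + X*E2) + X*(X*E1+X*E2) + E2*X"
      by (simp add: algebra_simps power2_eq_square)
    also have "\<dots> = (E1+E2)*R^2 - 2*R*E1 + X*E1 + E2*X" using X by simp
    also have "\<dots> = (E1+E2)*R^2 - 2*R*E1 + E1" using X by (simp add: algebra_simps)
    finally show ?thesis by (simp add: algebra_simps power2_eq_square)
  qed
  have "E1*E2*(\<phi>*R*(\<phi>*R/E1) + \<phi>*(1-R)*(\<phi>*(1-R)/E2)) = E1*E2*(\<phi>^2*(X/E1) + \<phi>^2*(1/E1+1/E2)*(R-X)^2)"
    using a b c by simp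
  then show ?thesis using E by simp
qed

lemma Jform:
  fixes B1 B2 C1 C2 F1 F2 \<phi> r1 r2 E1 E2 \<alpha> :: real and x :: "real \<times> real"
  assumes pos: "B1 > 0" "B2 > 0" "C1 > 0" "C2 > 0" "F1 > 0" "F2 > 0" "\<phi> > 0"
    and crit: "C1 < B1" "C2 < B2"
    and r: "r1 + r2 = 1"
    and E1_def: "E1 = Ecap B1 C1 F1" and E2_def: "E2 = Ecap B2 C2 F2"
    and al: "0 \<le> \<alpha>"
    and eq: "is_equilibrium B1 B2 C1 C2 F1 F2 \<phi> r1 r2 \<alpha> x"
    and ns1: "\<phi> * R1 B1 B2 r1 \<alpha> x \<le> F1" and ns2: "\<phi> * R2 B1 B2 r2 \<alpha> x \<le> F2"
  shows "Jcost B1 B2 \<phi> r1 r2 \<alpha> x = \<phi>^2/(E1+E2) + \<phi>^2*(1/E1+1/E2)*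
     (((r1 - E1/(E1+E2)) + (1/2 - r1)*\<alpha>)/(1 + (\<phi>*(1/E1+1/E2)/2)*\<alpha>))^2"
proof -
  have E: "E1 > 0" "E2 > 0" using pos unfolding E1_def E2_def Ecap_def by auto
  have om: "0 \<le> fst x" "fst x \<le> B1" "0 \<le> snd x" "snd x \<le> B2"
    using eq unfolding is_equilibrium_def Omega_def by (auto simp: mem_Times_iff)
  have e1: "(F1/C1) * fst x = \<phi> * R1 B1 B2 r1 \<alpha> x"
    by (rule eq_lin[of _ B1]) (use eq ns1 om pos crit in \<open>auto simp: is_equilibrium_def\<close>)
  have e2: "(F2/C2) * snd x = \<phi> * R2 B1 B2 r2 \<alpha> x"
    by (rule eq_lin[of _ B2]) (use eq ns2 om pos crit in \<open>auto simp: is_equilibrium_def\<close>)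
  define R where "R = R1 B1 B2 r1 \<alpha> x"
  have R2eq: "R2 B1 B2 r2 \<alpha> x = 1 - R"
  proof -
    have r2e: "r2 = 1 - r1" using r by simp
    show ?thesis unfolding R_def R1_def R2_def r2e by (simp add: algebra_simps)
  qed
  have y1: "fst x / B1 = \<phi>*R/E1"
    using e1 pos unfolding R_def E1_def Ecap_def by (simp add: field_simps)
  have y2: "snd x / B2 = \<phi>*(1-R)/E2"
    using e2 pos R2eq unfolding E2_def Ecap_def by (simp add: field_simps)
  have Rlin: "R = (1-\<alpha>)*r1 + \<alpha>*(1/2 + 1/2*(\<phi>*(1-R)/E2 - \<phi>*R/E1))"
    using y1 y2 unfolding R_def R1_def by simp
  define D where "D = 1 + (\<phi>*(1/E1+1/E2)/2)*\<alpha>"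
  have Dp: "D > 0" using E pos al unfolding D_def by (simp add: add_pos_nonneg)
  have "(R - E1/(E1+E2)) * D = (r1 - E1/(E1+E2)) + (1/2 - r1)*\<alpha>"
  proof -
    have h2: "E1 * (R * (\<alpha> * \<phi>)) + (E2 * (R * (\<alpha> * \<phi>)) + (E1 * (E2 * (R * 2)) + E1 * (E2 * (\<alpha> * (r1 * 2))))) =
        E1 * (E2 * \<alpha>) + (E1 * (\<alpha> * \<phi>) + E1 * (E2 * (r1 * 2)))"
      using Rlin E by (simp add: field_simps)
    define X where "X = E1/(E1+E2)"
    have "E1 + E2 \<noteq> 0" using E by simp
    then have "X*(E1+E2) = E1" unfolding X_def by simp
    then have X: "X*E1 + X*E2 = E1" by (simp add: distrib_left)
    have DD: "2*E1*E2*D = 2*E1*E2 + \<phi>*\<alpha>*E1 + \<phi>*\<alpha>*E2"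
      unfolding D_def using E by (simp add: field_simps)
    have "2*E1*E2*((R - X) * D - ((r1 - X) + (1/2 - r1)*\<alpha>)) =
       (R - X)*(2*E1*E2*D) - 2*E1*E2*(r1 - X) - E1*E2*\<alpha> + 2*E1*E2*r1*\<alpha>"
      by (simp add: algebra_simps)
    also have "\<dots> = (R - X)*(2*E1*E2 + \<phi>*\<alpha>*E1 + \<phi>*\<alpha>*E2) - 2*E1*E2*(r1 - X) - E1*E2*\<alpha> + 2*E1*E2*r1*\<alpha>"
      using DD by simp
    also have "\<dots> = 2*E1*E2*R + R*\<phi>*\<alpha>*E1 + R*\<phi>*\<alpha>*E2 - \<phi>*\<alpha>*(X*E1 + X*E2) - 2*E1*E2*r1 - E1*E2*\<alpha> + 2*E1*E2*r1*\<alpha>"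
      by (simp add: algebra_simps)
    also have "\<dots> = 0" using X h2 by (simp add: algebra_simps)
    finally have "(R - X) * D - ((r1 - X) + (1/2 - r1)*\<alpha>) = 0" using E by simp
    then show ?thesis unfolding X_def by simp
  qed
  then have hR: "R - E1/(E1+E2) = ((r1 - E1/(E1+E2)) + (1/2 - r1)*\<alpha>) / D"
    using Dp by (simp add: field_simps)
  have "Jcost B1 B2 \<phi> r1 r2 \<alpha> x = \<phi>*R*(\<phi>*R/E1) + \<phi>*(1-R)*(\<phi>*(1-R)/E2)"
    unfolding Jcost_def using y1 y2 R2eq R_def by simp
  also have "\<dots> = \<phi>^2*((E1/(E1+E2))/E1) + \<phi>^2*(1/E1+1/E2)*(R - E1/(E1+E2))^2"
  proof (rule quad_id[OF E])
    have "E1 + E2 \<noteq> 0" using E by simp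
    then have "E1/(E1+E2)*(E1+E2) = E1" by simp
    then show "E1/(E1+E2)*E1 + E1/(E1+E2)*E2 = E1" by (simp add: distrib_left)
  qed
  finally have JJ: "Jcost B1 B2 \<phi> r1 r2 \<alpha> x = \<phi>^2*((E1/(E1+E2))/E1) + \<phi>^2*(1/E1+1/E2)*(R - E1/(E1+E2))^2" .
  have ee: "(E1/(E1+E2))/E1 = 1/(E1+E2)" using E by simp
  have ff: "\<phi>^2*(1/(E1+E2)) = \<phi>^2/(E1+E2)" by simp
  show ?thesis unfolding JJ ee ff hR D_def ..
qed

lemma sgnQ_lt: fixes P Q :: real shows "P*Q < 0 \<Longrightarrow> Q > 0 \<Longrightarrow> P < 0"
  by (simp add: mult_less_0_iff)
lemma sgnQ_gt: fixes P Q :: real shows "P*Q > 0 \<Longrightarrow> Q > 0 \<Longrightarrow> P > 0"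
  by (simp add: zero_less_mult_iff)
lemma sgnQ_ge: fixes P Q :: real shows "P*Q \<ge> 0 \<Longrightarrow> Q > 0 \<Longrightarrow> P \<ge> 0"
  by (simp add: zero_le_mult_iff)
lemma sgnQ_le: fixes P Q :: real shows "P*Q \<le> 0 \<Longrightarrow> Q > 0 \<Longrightarrow> P \<le> 0"
  by (simp add: mult_le_0_iff)

lemma incr_crit:
  fixes J :: "real \<Rightarrow> real"
  assumes Jf: "\<forall>\<alpha>\<in>{0..1}. J \<alpha> = K0 + K1*((l0+l1*\<alpha>)/(1+c*\<alpha>))^2" and K: "K1 \<ge> 0" "c \<ge> 0"
    and A: "A \<subseteq> {0..1}"
    and H: "\<forall>a\<in>A. \<forall>b\<in>A. a \<le> b \<longrightarrow> (l1 - l0*c)*((l0+l1*a)*(1+c*b) + (l0+l1*b)*(1+c*a)) \<ge> 0"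
  shows "incr_on A J"
  unfolding incr_on_def
proof (intro ballI impI)
  fix a b assume ab: "a \<in> A" "b \<in> A" "a \<le> b"
  then have a01: "a \<in> {0..1}" "b \<in> {0..1}" using A by auto
  have p: "1 + c*a > 0" "1 + c*b > 0" using a01 K by (auto intro: add_pos_nonneg)
  have "((l0+l1*a)/(1+c*a))^2 \<le> ((l0+l1*b)/(1+c*b))^2"
    using sq_mono[OF p ab(3)] H ab by auto
  then have "K1*((l0+l1*a)/(1+c*a))^2 \<le> K1*((l0+l1*b)/(1+c*b))^2" by (rule mult_left_mono[OF _ K(1)])
  then show "J a \<le> J b" using Jf a01 by simp
qed

lemma decr_crit:
  fixes J :: "real \<Rightarrow> real"
  assumes Jf: "\<forall>\<alpha>\<in>{0..1}. J \<alpha> = K0 + K1*((l0+l1*\<alpha>)/(1+c*\<alpha>))^2" and K: "K1 \<ge> 0" "c \<ge> 0"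
    and A: "A \<subseteq> {0..1}"
    and H: "\<forall>a\<in>A. \<forall>b\<in>A. a \<le> b \<longrightarrow> (l1 - l0*c)*((l0+l1*a)*(1+c*b) + (l0+l1*b)*(1+c*a)) \<le> 0"
  shows "decr_on A J"
  unfolding decr_on_def
proof (intro ballI impI)
  fix a b assume ab: "a \<in> A" "b \<in> A" "a \<le> b"
  then have a01: "a \<in> {0..1}" "b \<in> {0..1}" using A by auto
  have p: "1 + c*a > 0" "1 + c*b > 0" using a01 K by (auto intro: add_pos_nonneg)
  have "((l0+l1*b)/(1+c*b))^2 \<le> ((l0+l1*a)/(1+c*a))^2"
    using sq_anti[OF p ab(3)] H ab by auto
  then have "K1*((l0+l1*b)/(1+c*b))^2 \<le> K1*((l0+l1*a)/(1+c*a))^2" by (rule mult_left_mono[OF _ K(1)])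
  then show "J b \<le> J a" using Jf a01 by simp
qed

lemma sgn_pp: fixes t x y p q :: real
  assumes "t \<ge> 0" "x \<ge> 0" "y \<ge> 0" "p > 0" "q > 0" shows "t*(x*q + y*p) \<ge> 0"
proof -
  have "x*q \<ge> 0" "y*p \<ge> 0" using assms by auto
  then show ?thesis using assms(1) by simp
qed
lemma sgn_nn: fixes t x y p q :: real
  assumes "t \<le> 0" "x \<le> 0" "y \<le> 0" "p > 0" "q > 0" shows "t*(x*q + y*p) \<ge> 0"
proof -
  have "x*q \<le> 0" "y*p \<le> 0" using assms by (auto simp: mult_nonpos_nonneg)
  then have "x*q + y*p \<le> 0" by simp
  then show ?thesis using assms(1) by (simp add: mult_nonpos_nonpos)
qed
lemma sgn_pn: fixes t x y p q :: real
  assumes "t \<ge> 0" "x \<le> 0" "y \<le> 0" "p > 0" "q > 0" shows "t*(x*q + y*p) \<le> 0"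
proof -
  have "x*q \<le> 0" "y*p \<le> 0" using assms by (auto simp: mult_nonpos_nonneg)
  then have "x*q + y*p \<le> 0" by simp
  then show ?thesis using assms(1) by (simp add: mult_nonneg_nonpos)
qed
lemma sgn_np: fixes t x y p q :: real
  assumes "t \<le> 0" "x \<ge> 0" "y \<ge> 0" "p > 0" "q > 0" shows "t*(x*q + y*p) \<le> 0"
proof -
  have "x*q \<ge> 0" "y*p \<ge> 0" using assms by auto
  then have "x*q + y*p \<ge> 0" by simp
  then show ?thesis using assms(1) by (simp add: mult_nonpos_nonneg)
qed

lemma incr_pp:
  fixes J :: "real \<Rightarrow> real"
  assumes Jf: "\<forall>\<alpha>\<in>{0..1}. J \<alpha> = K0 + K1*((l0+l1*\<alpha>)/(1+c*\<alpha>))^2" and K: "K1 \<ge> 0" "c \<ge> 0"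
    and A: "A \<subseteq> {0..1}" and t: "l1 - l0*c \<ge> 0" and L: "\<forall>a\<in>A. l0+l1*a \<ge> 0"
  shows "incr_on A J"
  apply (rule incr_crit[OF Jf K A])
  using A K t L by (auto intro!: sgn_pp add_pos_nonneg)

lemma incr_nn:
  fixes J :: "real \<Rightarrow> real"
  assumes Jf: "\<forall>\<alpha>\<in>{0..1}. J \<alpha> = K0 + K1*((l0+l1*\<alpha>)/(1+c*\<alpha>))^2" and K: "K1 \<ge> 0" "c \<ge> 0"
    and A: "A \<subseteq> {0..1}" and t: "l1 - l0*c \<le> 0" and L: "\<forall>a\<in>A. l0+l1*a \<le> 0"
  shows "incr_on A J"
  apply (rule incr_crit[OF Jf K A])
  using A K t L by (auto intro!: sgn_nn add_pos_nonneg)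

lemma decr_pn:
  fixes J :: "real \<Rightarrow> real"
  assumes Jf: "\<forall>\<alpha>\<in>{0..1}. J \<alpha> = K0 + K1*((l0+l1*\<alpha>)/(1+c*\<alpha>))^2" and K: "K1 \<ge> 0" "c \<ge> 0"
    and A: "A \<subseteq> {0..1}" and t: "l1 - l0*c \<ge> 0" and L: "\<forall>a\<in>A. l0+l1*a \<le> 0"
  shows "decr_on A J"
  apply (rule decr_crit[OF Jf K A])
  using A K t L by (auto intro!: sgn_pn add_pos_nonneg)

lemma decr_np:
  fixes J :: "real \<Rightarrow> real"
  assumes Jf: "\<forall>\<alpha>\<in>{0..1}. J \<alpha> = K0 + K1*((l0+l1*\<alpha>)/(1+c*\<alpha>))^2" and K: "K1 \<ge> 0" "c \<ge> 0"
    and A: "A \<subseteq> {0..1}" and t: "l1 - l0*c \<le> 0" and L: "\<forall>a\<in>A. l0+l1*a \<ge> 0"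
  shows "decr_on A J"
  apply (rule decr_crit[OF Jf K A])
  using A K t L by (auto intro!: sgn_np add_pos_nonneg)

lemma Lsign_pos: fixes l0 l1 a :: real
  shows "0 \<le> a \<Longrightarrow> a \<le> 1 \<Longrightarrow> l0 \<ge> 0 \<Longrightarrow> l0 + l1 \<ge> 0 \<Longrightarrow> l0 + l1*a \<ge> 0"
proof -
  assume h: "0 \<le> a" "a \<le> 1" "l0 \<ge> 0" "l0 + l1 \<ge> 0"
  have "l0 + l1*a = (1-a)*l0 + a*(l0+l1)" by (simp add: algebra_simps)
  also have "\<dots> \<ge> 0"
  proof -
    have "(1-a)*l0 \<ge> 0" "a*(l0+l1) \<ge> 0" using h by auto
    then show ?thesis by simp
  qed
  finally show ?thesis .
qed

lemma Lsign_neg: fixes l0 l1 a :: real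
  shows "0 \<le> a \<Longrightarrow> a \<le> 1 \<Longrightarrow> l0 \<le> 0 \<Longrightarrow> l0 + l1 \<le> 0 \<Longrightarrow> l0 + l1*a \<le> 0"
  using Lsign_pos[of a "-l0" "-l1"] by simp


theorem proposition4:
  fixes B1 B2 C1 C2 F1 F2 \<phi> r1 r2 E1 E2 :: real
    and J :: "real \<Rightarrow> real"
  assumes pos: "B1 > 0" "B2 > 0" "C1 > 0" "C2 > 0" "F1 > 0" "F2 > 0" "\<phi> > 0"
    and crit: "C1 < B1" "C2 < B2"
    and r: "r1 \<ge> 0" "r2 \<ge> 0" "r1 + r2 = 1"
    and E1_def: "E1 = Ecap B1 C1 F1" and E2_def: "E2 = Ecap B2 C2 F2"
    and cap: "\<phi> < F1 + F2"
    and capr: "\<forall>\<alpha>\<in>{0..1}. F1 > (1 - \<alpha>) * \<phi> * r1 \<and> F2 > (1 - \<alpha>) * \<phi> * r2"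
    and phiE: "\<phi> < E1" "\<phi> < E2"
    and uniq: "\<forall>\<alpha>\<in>{0..1}. \<exists>!x. is_equilibrium B1 B2 C1 C2 F1 F2 \<phi> r1 r2 \<alpha> x"
    and nounsat: "\<forall>\<alpha>\<in>{0..1}.
        \<phi> * R1 B1 B2 r1 \<alpha> (xbar B1 B2 C1 C2 F1 F2 \<phi> r1 r2 \<alpha>) \<le> F1 \<and>
        \<phi> * R2 B1 B2 r2 \<alpha> (xbar B1 B2 C1 C2 F1 F2 \<phi> r1 r2 \<alpha>) \<le> F2"
    and J_def: "J = (\<lambda>\<alpha>. Jcost B1 B2 \<phi> r1 r2 \<alpha> (xbar B1 B2 C1 C2 F1 F2 \<phi> r1 r2 \<alpha>))"
  shows
   "(E1 \<ge> E2 \<longrightarrow>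
      (r1 < 1/2 \<longrightarrow> decr_on {0..1} J) \<and>
      (1/2 \<le> r1 \<and> r1 \<le> xi2 E1 E2 F1 F2 \<and> \<phi> < phibar E1 E2 r1 \<longrightarrow> incr_on {0..1} J) \<and>
      (1/2 \<le> r1 \<and> r1 \<le> xi2 E1 E2 F1 F2 \<and> \<phi> \<ge> phibar E1 E2 r1 \<longrightarrow> decr_on {0..1} J) \<and>
      (xi2 E1 E2 F1 F2 \<le> r1 \<and> r1 \<le> xi1 E1 E2 \<longrightarrow> incr_on {0..1} J) \<and>
      (r1 \<ge> xi1 E1 E2 \<longrightarrow>
         incr_on {alphabar E1 E2 r1<..1} J \<and> alphabar E1 E2 r1 \<in> {0..1} \<and>
         (\<forall>\<alpha>\<in>{0..1}. J (alphabar E1 E2 r1) \<le> J \<alpha>)))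
    \<and>
    (E1 < E2 \<longrightarrow>
      (r1 \<le> xi1 E1 E2 \<longrightarrow>
         incr_on {alphabar E1 E2 r1<..1} J \<and> alphabar E1 E2 r1 \<in> {0..1} \<and>
         (\<forall>\<alpha>\<in>{0..1}. J (alphabar E1 E2 r1) \<le> J \<alpha>)) \<and>
      (xi1 E1 E2 < r1 \<and> r1 \<le> xi2 E1 E2 F1 F2 \<longrightarrow> incr_on {0..1} J) \<and>
      (xi2 E1 E2 F1 F2 < r1 \<and> r1 \<le> 1/2 \<and> \<phi> < phibar E1 E2 r1 \<longrightarrow> incr_on {0..1} J) \<and>
      (xi2 E1 E2 F1 F2 < r1 \<and> r1 \<le> 1/2 \<and> \<phi> \<ge> phibar E1 E2 r1 \<longrightarrow> decr_on {0..1} J) \<and>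
      (r1 > 1/2 \<longrightarrow> decr_on {0..1} J))"
proof -
  have E: "E1 > 0" "E2 > 0" using pos unfolding E1_def E2_def Ecap_def by auto
  define \<xi> where "\<xi> = E1/(E1+E2)"
  define k where "k = 1/E1 + 1/E2"
  define c where "c = \<phi>*(1/E1+1/E2)/2"
  define l0 where "l0 = r1 - \<xi>"
  define l1 where "l1 = 1/2 - r1"
  have Jf: "\<forall>\<alpha>\<in>{0..1}. J \<alpha> = \<phi>^2/(E1+E2) + (\<phi>^2*k)*((l0+l1*\<alpha>)/(1+c*\<alpha>))^2"
  proof
    fix \<alpha> :: real assume \<alpha>: "\<alpha> \<in> {0..1}"
    have eq: "is_equilibrium B1 B2 C1 C2 F1 F2 \<phi> r1 r2 \<alpha> (xbar B1 B2 C1 C2 F1 F2 \<phi> r1 r2 \<alpha>)"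
      using uniq \<alpha> unfolding xbar_def by (metis theI')
    have ns: "\<phi> * R1 B1 B2 r1 \<alpha> (xbar B1 B2 C1 C2 F1 F2 \<phi> r1 r2 \<alpha>) \<le> F1"
        "\<phi> * R2 B1 B2 r2 \<alpha> (xbar B1 B2 C1 C2 F1 F2 \<phi> r1 r2 \<alpha>) \<le> F2"
      using nounsat \<alpha> by auto
    have "\<alpha> \<ge> 0" using \<alpha> by simp
    from Jform[OF pos crit r(3) E1_def E2_def this eq ns]
    show "J \<alpha> = \<phi>^2/(E1+E2) + (\<phi>^2*k)*((l0+l1*\<alpha>)/(1+c*\<alpha>))^2"
      unfolding J_def l0_def l1_def c_def k_def \<xi>_def by (simp add: mult.assoc)
  qed
  have kp: "1/E1 + 1/E2 > 0" using E by (simp add: add_pos_pos)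
  have cpos: "c > 0" using kp pos unfolding c_def by simp
  have K: "\<phi>^2*k \<ge> 0" "c \<ge> 0" using kp cpos unfolding k_def by auto
  have Xr: "\<xi>*E1 + \<xi>*E2 = E1"
  proof -
    have "E1 + E2 \<noteq> 0" using E by simp
    then have "\<xi>*(E1+E2) = E1" unfolding \<xi>_def by simp
    then show ?thesis by (simp add: distrib_left)
  qed
  have xh: "(\<xi> - 1/2)*(2*(E1+E2)) = E1 - E2" using Xr by (simp add: algebra_simps)
  have xi_ge: "E1 \<ge> E2 \<Longrightarrow> \<xi> \<ge> 1/2"
  proof -
    assume "E1 \<ge> E2"
    then have "(\<xi> - 1/2)*(2*(E1+E2)) \<ge> 0" using xh by simp
    then show ?thesis using E by (simp add: zero_le_mult_iff)
  qed
  have xi_lt: "E1 < E2 \<Longrightarrow> \<xi> < 1/2"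
  proof -
    assume "E1 < E2"
    then have "(\<xi> - 1/2)*(2*(E1+E2)) < 0" using xh by simp
    then show ?thesis using E by (simp add: mult_less_0_iff)
  qed
  define S where "S = F1 + F2"
  define M where "M = 2*E1*E2 + (E1+E2)*S"
  define Y where "Y = xi2 E1 E2 F1 F2"
  have Mpos: "M > 0" using E pos unfolding M_def S_def by (simp add: add_pos_pos)
  have YM: "Y*M = E1*E2 + E1*S" unfolding Y_def xi2_def M_def S_def using Mpos[unfolded M_def S_def] by simp
  have xY: "(\<xi> - Y)*((E1+E2)*M) = E1*E2*(E1-E2)"
  proof -
    have "(\<xi> - Y)*((E1+E2)*M) = (\<xi>*E1+\<xi>*E2)*M - (Y*M)*(E1+E2)" by (simp add: algebra_simps)
    also have "\<dots> = E1*M - (E1*E2 + E1*S)*(E1+E2)" using Xr YM by simp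
    also have "\<dots> = E1*E2*(E1-E2)" unfolding M_def by (simp add: algebra_simps)
    finally show ?thesis .
  qed
  have EM: "(E1+E2)*M > 0" using E Mpos by simp
  have Y_le: "E1 \<ge> E2 \<Longrightarrow> Y \<le> \<xi>"
  proof -
    assume "E1 \<ge> E2"
    then have "(\<xi> - Y)*((E1+E2)*M) \<ge> 0" using xY E by simp
    from sgnQ_ge[OF this EM] show ?thesis by simp
  qed
  have Y_gt: "E1 < E2 \<Longrightarrow> Y > \<xi>"
  proof -
    assume "E1 < E2"
    then have "(\<xi> - Y)*((E1+E2)*M) < 0" using xY E by (simp add: mult_pos_neg)
    from sgnQ_lt[OF this EM] show ?thesis by simp
  qed
  have Y_lt: "E1 > E2 \<Longrightarrow> Y < \<xi>"
  proof -
    assume "E1 > E2"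
    then have "(\<xi> - Y)*((E1+E2)*M) > 0" using xY E by simp
    from sgnQ_gt[OF this EM] show ?thesis by simp
  qed
  define \<sigma> where "\<sigma> = E1*E2*(1-2*r1) - \<phi>*(r1*(E1+E2) - E1)"
  define d where "d = r1*(E1+E2) - E1"
  have dl0: "d = l0*(E1+E2)"
  proof -
    have "l0*(E1+E2) = r1*(E1+E2) - (\<xi>*E1 + \<xi>*E2)" unfolding l0_def by (simp add: algebra_simps)
    then show ?thesis unfolding d_def using Xr by simp
  qed
  have tau: "(l1 - l0*c)*(2*E1*E2) = \<sigma>"
  proof -
    have c2: "c*(2*E1*E2) = \<phi>*(E1+E2)" unfolding c_def using E by (simp add: field_simps)
    have "(l1 - l0*c)*(2*E1*E2) = l1*(2*E1*E2) - l0*(c*(2*E1*E2))"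
      by (simp only: left_diff_distrib mult.assoc)
    also have "\<dots> = l1*(2*E1*E2) - \<phi>*(l0*(E1+E2))" unfolding c2 by simp
    also have "\<dots> = l1*(2*E1*E2) - \<phi>*d" unfolding dl0 ..
    also have "\<dots> = \<sigma>" unfolding \<sigma>_def d_def l1_def by (simp add: algebra_simps)
    finally show ?thesis .
  qed
  have EE: "2*E1*E2 > 0" using E by simp
  have tau_le: "\<sigma> \<le> 0 \<Longrightarrow> l1 - l0*c \<le> 0"
    using tau EE sgnQ_le[of "l1 - l0*c" "2*E1*E2"] by simp
  have tau_ge: "\<sigma> \<ge> 0 \<Longrightarrow> l1 - l0*c \<ge> 0"
    using tau EE sgnQ_ge[of "l1 - l0*c" "2*E1*E2"] by simp
  define sY where "sY = E1*E2*(1-2*Y) - \<phi>*(Y*(E1+E2) - E1)"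
  have slin: "\<sigma> = sY - (r1 - Y)*(2*E1*E2 + \<phi>*(E1+E2))"
    unfolding \<sigma>_def sY_def by (simp add: algebra_simps)
  have sYM: "sY*M = E1*E2*(E2-E1)*(S-\<phi>)"
  proof -
    have "sY*M = E1*E2*(M - 2*(Y*M)) - \<phi>*((Y*M)*(E1+E2) - E1*M)"
      unfolding sY_def by (simp add: algebra_simps)
    also have "\<dots> = E1*E2*(E2-E1)*(S-\<phi>)" unfolding YM unfolding M_def by (simp add: algebra_simps)
    finally show ?thesis .
  qed
  have Sphi: "S - \<phi> > 0" using cap S_def by simp
  have sY_le: "E1 \<ge> E2 \<Longrightarrow> sY \<le> 0"
  proof -
    assume "E1 \<ge> E2"
    then have "E1*E2*(E2-E1) \<le> 0" using mult_nonneg_nonpos[of "E1*E2" "E2-E1"] E by simp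
    then have "E1*E2*(E2-E1)*(S-\<phi>) \<le> 0" using mult_nonpos_nonneg[of "E1*E2*(E2-E1)" "S-\<phi>"] Sphi by simp
    then show ?thesis using sgnQ_le[of sY M] sYM Mpos by simp
  qed
  have sY_gt: "E1 < E2 \<Longrightarrow> sY > 0"
  proof -
    assume "E1 < E2"
    then have "E1*E2*(E2-E1)*(S-\<phi>) > 0" using E Sphi by simp
    then show ?thesis using sgnQ_gt[of sY M] sYM Mpos by simp
  qed
  have slope: "2*E1*E2 + \<phi>*(E1+E2) > 0" using E pos by (simp add: add_pos_pos)
  have sig_le: "E1 \<ge> E2 \<Longrightarrow> r1 \<ge> Y \<Longrightarrow> \<sigma> \<le> 0"
  proof -
    assume h: "E1 \<ge> E2" "r1 \<ge> Y"
    have "(r1 - Y)*(2*E1*E2 + \<phi>*(E1+E2)) \<ge> 0" using h slope by simp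
    then show ?thesis using slin sY_le[OF h(1)] by simp
  qed
  have sig_gt: "E1 < E2 \<Longrightarrow> r1 \<le> Y \<Longrightarrow> \<sigma> > 0"
  proof -
    assume h: "E1 < E2" "r1 \<le> Y"
    have "(r1 - Y)*(2*E1*E2 + \<phi>*(E1+E2)) \<le> 0" using h slope by (simp add: mult_nonpos_nonneg)
    then show ?thesis using slin sY_gt[OF h(1)] by simp
  qed
  have pb: "phibar E1 E2 r1 = E1*E2*(1-2*r1)/d" unfolding phibar_def d_def by simp
  have ab: "alphabar E1 E2 r1 = - l0/l1"
  proof (cases "l1 = 0")
    case True
    then have "2*r1 - 1 = 0" unfolding l1_def by simp
    then show ?thesis using True unfolding alphabar_def by simp
  next
    case False
    have n: "2*(r1*(E1+E2) - E1) = (2*l0)*(E1+E2)" using dl0 d_def by simp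
    have dd: "(2*r1-1)*(E1+E2) = (-2*l1)*(E1+E2)" unfolding l1_def by (simp add: algebra_simps)
    have ne: "E1 + E2 \<noteq> 0" using E by simp
    have "alphabar E1 E2 r1 = ((2*l0)*(E1+E2))/((-2*l1)*(E1+E2))" unfolding alphabar_def n dd ..
    also have "\<dots> = (2*l0)/(-2*l1)" using nonzero_mult_divide_mult_cancel_right[OF ne] by simp
    also have "\<dots> = -l0/l1" by simp
    finally show ?thesis .
  qed
  have L01: "l0 + l1 = 1/2 - \<xi>" unfolding l0_def l1_def by simp
  have sub01: "{0..1::real} \<subseteq> {0..1}" by simp
  have minJ: "\<forall>\<alpha>\<in>{0..1}. J (alphabar E1 E2 r1) \<le> J \<alpha>"
    if h: "alphabar E1 E2 r1 \<in> {0..1}" "l1 \<noteq> 0 \<or> l0 = 0"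
  proof
    fix \<alpha> :: real assume a: "\<alpha> \<in> {0..1}"
    have "l0 + l1*alphabar E1 E2 r1 = 0" using h(2) ab by auto
    then have "J (alphabar E1 E2 r1) = \<phi>^2/(E1+E2)" using Jf h(1) by simp
    also have "\<dots> \<le> J \<alpha>" using Jf a K by simp
    finally show "J (alphabar E1 E2 r1) \<le> J \<alpha>" .
  qed
  have Lgt: "\<forall>a\<in>{alphabar E1 E2 r1<..1}. l0 + l1*a = l1*(a - alphabar E1 E2 r1)" if "l1 \<noteq> 0"
    using that ab by (auto simp: algebra_simps)
  have sub2: "{alphabar E1 E2 r1<..1} \<subseteq> {0..1}" if "alphabar E1 E2 r1 \<ge> 0" using that by auto

  have A1: "decr_on {0..1} J" if "E1 \<ge> E2" "r1 < 1/2"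
  proof (rule decr_pn[OF Jf K sub01])
    have "l0 < 0" "l1 > 0" using that xi_ge unfolding l0_def l1_def by auto
    moreover have "l0*c < 0" using \<open>l0 < 0\<close> cpos by (simp add: mult_neg_pos)
    ultimately show "l1 - l0*c \<ge> 0" by linarith
    show "\<forall>a\<in>{0..1}. l0 + l1*a \<le> 0" using \<open>l0 < 0\<close> L01 xi_ge[OF that(1)] by (auto intro!: Lsign_neg)
  qed
  have A2: "incr_on {0..1} J" if "E1 \<ge> E2" "1/2 \<le> r1" "r1 \<le> xi2 E1 E2 F1 F2" "\<phi> < phibar E1 E2 r1"
  proof (rule incr_nn[OF Jf K sub01])
    have "l0 \<le> 0" using that Y_le unfolding l0_def Y_def by force
    then show "\<forall>a\<in>{0..1}. l0 + l1*a \<le> 0" using L01 xi_ge[OF that(1)] by (auto intro!: Lsign_neg)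
    have "d \<le> 0" using \<open>l0 \<le> 0\<close> dl0 E by (simp add: mult_nonpos_nonneg)
    moreover have "d \<noteq> 0" using that(4) pb pos by auto
    ultimately have "d < 0" by simp
    then have "E1*E2*(1-2*r1) < \<phi>*d" using that(4) pb by (simp add: less_divide_eq)
    then have "\<sigma> \<le> 0" unfolding \<sigma>_def d_def by simp
    then show "l1 - l0*c \<le> 0" by (rule tau_le)
  qed
  have A3: "decr_on {0..1} J" if "E1 \<ge> E2" "1/2 \<le> r1" "r1 \<le> xi2 E1 E2 F1 F2" "\<phi> \<ge> phibar E1 E2 r1"
  proof (cases "d = 0")
    case True
    then have "l0 = 0" using dl0 E by simp
    then have "r1 = \<xi>" unfolding l0_def by simp
    then have "\<xi> \<le> Y" using that(3) Y_def by simp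
    then have "E1 = E2" using Y_lt that(1) by force
    then have "\<xi> = 1/2" using xh E by simp
    then have "l1 = 0" using \<open>r1 = \<xi>\<close> l1_def by simp
    show ?thesis
      by (rule decr_pn[OF Jf K sub01]) (use \<open>l0 = 0\<close> \<open>l1 = 0\<close> in auto)
  next
    case False
    show ?thesis
    proof (rule decr_pn[OF Jf K sub01])
      have "l0 \<le> 0" using that Y_le unfolding l0_def Y_def by force
      then show "\<forall>a\<in>{0..1}. l0 + l1*a \<le> 0" using L01 xi_ge[OF that(1)] by (auto intro!: Lsign_neg)
      have "d \<le> 0" using \<open>l0 \<le> 0\<close> dl0 E by (simp add: mult_nonpos_nonneg)
      then have "d < 0" using False by simp
      then have "\<phi>*d \<le> E1*E2*(1-2*r1)" using that(4) pb by (simp add: divide_le_eq)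
      then have "\<sigma> \<ge> 0" unfolding \<sigma>_def d_def by simp
      then show "l1 - l0*c \<ge> 0" by (rule tau_ge)
    qed
  qed
  have A4: "incr_on {0..1} J" if "E1 \<ge> E2" "xi2 E1 E2 F1 F2 \<le> r1" "r1 \<le> xi1 E1 E2"
  proof (rule incr_nn[OF Jf K sub01])
    have "l0 \<le> 0" using that unfolding l0_def \<xi>_def xi1_def by simp
    then show "\<forall>a\<in>{0..1}. l0 + l1*a \<le> 0" using L01 xi_ge[OF that(1)] by (auto intro!: Lsign_neg)
    show "l1 - l0*c \<le> 0" using tau_le sig_le that Y_def by simp
  qed
  have A5: "incr_on {alphabar E1 E2 r1<..1} J \<and> alphabar E1 E2 r1 \<in> {0..1} \<and>
         (\<forall>\<alpha>\<in>{0..1}. J (alphabar E1 E2 r1) \<le> J \<alpha>)" if "E1 \<ge> E2" "r1 \<ge> xi1 E1 E2"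
  proof -
    have r\<xi>: "r1 \<ge> \<xi>" using that unfolding \<xi>_def xi1_def by simp
    have xg: "\<xi> \<ge> 1/2" using xi_ge that by simp
    have t: "l1 - l0*c \<le> 0" using tau_le sig_le that Y_le r\<xi> by force
    show ?thesis
    proof (cases "l1 = 0")
      case True
      then have "l0 = 0" using r\<xi> xg unfolding l0_def l1_def by simp
      have a0: "alphabar E1 E2 r1 = 0" using ab True by simp
      show ?thesis
        using minJ[of] a0 \<open>l0 = 0\<close> incr_nn[OF Jf K sub2 t] True by simp
    next
      case False
      then have l1n: "l1 < 0" using r\<xi> xg unfolding l1_def by simp
      have l0p: "l0 \<ge> 0" using r\<xi> unfolding l0_def by simp
      have a0: "alphabar E1 E2 r1 \<ge> 0" using ab l1n l0p by (simp add: divide_nonneg_neg)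
      have "l0 + l1 \<le> 0" using L01 xg by simp
      then have "-1 \<le> l0/l1" using l1n by (simp add: le_divide_eq)
      then have a1: "alphabar E1 E2 r1 \<le> 1" using ab by simp
      have inc: "incr_on {alphabar E1 E2 r1<..1} J"
      proof (rule incr_nn[OF Jf K sub2[OF a0] t])
        show "\<forall>a\<in>{alphabar E1 E2 r1<..1}. l0 + l1*a \<le> 0"
          using Lgt[OF False] l1n by (auto simp: mult_nonpos_nonneg)
      qed
      show ?thesis using inc a0 a1 minJ False by simp
    qed
  qed
  have B1: "incr_on {alphabar E1 E2 r1<..1} J \<and> alphabar E1 E2 r1 \<in> {0..1} \<and>
         (\<forall>\<alpha>\<in>{0..1}. J (alphabar E1 E2 r1) \<le> J \<alpha>)" if "E1 < E2" "r1 \<le> xi1 E1 E2"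
  proof -
    have r\<xi>: "r1 \<le> \<xi>" using that unfolding \<xi>_def xi1_def by simp
    have xl: "\<xi> < 1/2" using xi_lt that by simp
    have l1p: "l1 > 0" using r\<xi> xl unfolding l1_def by simp
    have l0n: "l0 \<le> 0" using r\<xi> unfolding l0_def by simp
    have "l0*c \<le> 0" using l0n cpos mult_nonpos_nonneg[of l0 c] by simp
    then have t: "l1 - l0*c \<ge> 0" using l1p by linarith
    have "l0/l1 \<le> 0" using l1p l0n by (simp add: divide_nonpos_pos)
    then have a0: "alphabar E1 E2 r1 \<ge> 0" using ab by simp
    have "l0 + l1 \<ge> 0" using L01 xl by simp
    then have "-1 \<le> l0/l1" using l1p by (simp add: le_divide_eq)
    then have a1: "alphabar E1 E2 r1 \<le> 1" using ab by simp
    have inc: "incr_on {alphabar E1 E2 r1<..1} J"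
    proof (rule incr_pp[OF Jf K sub2[OF a0] t])
      show "\<forall>a\<in>{alphabar E1 E2 r1<..1}. l0 + l1*a \<ge> 0"
        using Lgt l1p by auto
    qed
    show ?thesis using inc a0 a1 minJ l1p by simp
  qed
  have B2: "incr_on {0..1} J" if "E1 < E2" "xi1 E1 E2 < r1" "r1 \<le> xi2 E1 E2 F1 F2"
  proof (rule incr_pp[OF Jf K sub01])
    have "l0 \<ge> 0" using that unfolding l0_def \<xi>_def xi1_def by simp
    then show "\<forall>a\<in>{0..1}. l0 + l1*a \<ge> 0" using L01 xi_lt[OF that(1)] by (auto intro!: Lsign_pos)
    show "l1 - l0*c \<ge> 0" using tau_ge sig_gt that Y_def by force
  qed
  have B3: "incr_on {0..1} J" if "E1 < E2" "xi2 E1 E2 F1 F2 < r1" "r1 \<le> 1/2" "\<phi> < phibar E1 E2 r1"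
  proof (rule incr_pp[OF Jf K sub01])
    have "l0 > 0" using that Y_gt unfolding l0_def Y_def by force
    then show "\<forall>a\<in>{0..1}. l0 + l1*a \<ge> 0" using L01 xi_lt[OF that(1)] by (auto intro!: Lsign_pos)
    have "d > 0" using \<open>l0 > 0\<close> dl0 E by simp
    then have "\<phi>*d < E1*E2*(1-2*r1)" using that(4) pb by (simp add: less_divide_eq)
    then have "\<sigma> \<ge> 0" unfolding \<sigma>_def d_def by simp
    then show "l1 - l0*c \<ge> 0" by (rule tau_ge)
  qed
  have B4: "decr_on {0..1} J" if "E1 < E2" "xi2 E1 E2 F1 F2 < r1" "r1 \<le> 1/2" "\<phi> \<ge> phibar E1 E2 r1"
  proof (rule decr_np[OF Jf K sub01])
    have "l0 > 0" using that Y_gt unfolding l0_def Y_def by force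
    then show "\<forall>a\<in>{0..1}. l0 + l1*a \<ge> 0" using L01 xi_lt[OF that(1)] by (auto intro!: Lsign_pos)
    have "d > 0" using \<open>l0 > 0\<close> dl0 E by simp
    then have "E1*E2*(1-2*r1) \<le> \<phi>*d" using that(4) pb by (simp add: divide_le_eq)
    then have "\<sigma> \<le> 0" unfolding \<sigma>_def d_def by simp
    then show "l1 - l0*c \<le> 0" by (rule tau_le)
  qed
  have B5: "decr_on {0..1} J" if "E1 < E2" "r1 > 1/2"
  proof (rule decr_np[OF Jf K sub01])
    have "l0 > 0" "l1 < 0" using that xi_lt unfolding l0_def l1_def by force+
    moreover have "l0*c > 0" using \<open>l0 > 0\<close> cpos by simp
    ultimately show "l1 - l0*c \<le> 0" by linarith
    show "\<forall>a\<in>{0..1}. l0 + l1*a \<ge> 0" using \<open>l0 > 0\<close> L01 xi_lt[OF that(1)] by (auto intro!: Lsign_pos)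
  qed
  show ?thesis using A1 A2 A3 A4 A5 B1 B2 B3 B4 B5 by (simp add: not_le)
qed


end
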